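(* Let $(X,\to,d_A)$ be a finitely branching metric transition system over $A$. Then $\mathit{lo}_S$ is $c_S$-compatible, i.e. $\mathit{lo}_S(c_S(\mathcal F))\subseteq c_S(\mathit{lo}_S(\mathcal F))$ for every $\mathcal F\subseteq[0,1]^X$.
   Context: A metric transition system: $(X,\to,d_A)$ with $\to\subseteq X\times A\times X$ and a metric $d_A\colon A\times A\to[0,1]$; finitely branching: each $\{(a,x')\mid x\xrightarrow{a}x'\}$ is finite. $r\oplus s=\min\{r+s,1\}$, $r\ominus s=\max\{0,r-s\}$. $\bigcirc_cf(x)=\bigvee\{(1-d_A(b,c))\land f(x')\mid x\xrightarrow{b}x'\}$ (empty join $=0$). $\mathit{lo}_S(\mathcal F)=\bigcup_{c\in A}\{\bigcirc_cf\mid f\in\mathrm{cl}^{\land,\mathrm{sh}}_f(\mathcal F)\}$, where $\mathrm{cl}^{\land,\mathrm{sh}}_f$ closes under finite pointwise meets (empty meet = constant 1) and constant shifts $f\mapsto f\ominus r$, $f\mapsto f\oplus r$, $r\in[0,1]$. $\alpha_S(\mathcal F)(x_1,x_2)=\bigvee_{f\in\mathcal F}(f(x_1)\ominus f(x_2))$, $\gamma_S(d)=\{f\mid\forall x_1,x_2\colon f(x_1)\ominus f(x_2)\le d(x_1,x_2)\}$ for directed pseudo-metrics $d$ on $X$, $c_S=\gamma_S\circ\alpha_S$. *)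

theory Defs
  imports Complex_Main
begin

definition tplus :: "real \<Rightarrow> real \<Rightarrow> real" where
  "tplus r s = min (r + s) 1"
definition tminus :: "real \<Rightarrow> real \<Rightarrow> real" where
  "tminus r s = max 0 (r - s)"

definition join01 :: "real set \<Rightarrow> real" where
  "join01 S = (if S = {} then 0 else Sup S)"

definition label_metric :: "('a \<Rightarrow> 'a \<Rightarrow> real) \<Rightarrow> bool" where
  "label_metric d \<longleftrightarrow>
     (\<forall>a b. 0 \<le> d a b \<and> d a b \<le> 1) \<and>
     (\<forall>a b. d a b = 0 \<longleftrightarrow> a = b) \<and>
     (\<forall>a b. d a b = d b a) \<and>
     (\<forall>a b c. d a c \<le> d a b + d b c)"

definition fin_branching :: "('x \<times> 'a \<times> 'x) set \<Rightarrow> bool" where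
  "fin_branching T \<longleftrightarrow> (\<forall>x. finite {(a, x'). (x, a, x') \<in> T})"

definition unit_fun :: "('x \<Rightarrow> real) \<Rightarrow> bool" where
  "unit_fun f \<longleftrightarrow> (\<forall>x. 0 \<le> f x \<and> f x \<le> 1)"

definition next_op :: "('x \<times> 'a \<times> 'x) set \<Rightarrow> ('a \<Rightarrow> 'a \<Rightarrow> real) \<Rightarrow> 'a \<Rightarrow> ('x \<Rightarrow> real) \<Rightarrow> 'x \<Rightarrow> real" where
  "next_op T d c f x = join01 {min (1 - d b c) (f x') | b x'. (x, b, x') \<in> T}"

text \<open>Closure under finite pointwise meets (empty meet = constant 1) and constant shifts.\<close>
inductive_set clos_meet_shift :: "('x \<Rightarrow> real) set \<Rightarrow> ('x \<Rightarrow> real) set" for F where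
  base: "f \<in> F \<Longrightarrow> f \<in> clos_meet_shift F"
| top: "(\<lambda>_. 1) \<in> clos_meet_shift F"
| meet: "f \<in> clos_meet_shift F \<Longrightarrow> g \<in> clos_meet_shift F \<Longrightarrow> (\<lambda>x. min (f x) (g x)) \<in> clos_meet_shift F"
| shift_down: "f \<in> clos_meet_shift F \<Longrightarrow> 0 \<le> r \<Longrightarrow> r \<le> 1 \<Longrightarrow> (\<lambda>x. tminus (f x) r) \<in> clos_meet_shift F"
| shift_up: "f \<in> clos_meet_shift F \<Longrightarrow> 0 \<le> r \<Longrightarrow> r \<le> 1 \<Longrightarrow> (\<lambda>x. tplus (f x) r) \<in> clos_meet_shift F"

definition lo_S :: "('x \<times> 'a \<times> 'x) set \<Rightarrow> ('a \<Rightarrow> 'a \<Rightarrow> real) \<Rightarrow> ('x \<Rightarrow> real) set \<Rightarrow> ('x \<Rightarrow> real) set" where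
  "lo_S T d F = (\<Union>c. {next_op T d c f | f. f \<in> clos_meet_shift F})"

definition alpha_S :: "('x \<Rightarrow> real) set \<Rightarrow> 'x \<Rightarrow> 'x \<Rightarrow> real" where
  "alpha_S F x1 x2 = join01 {tminus (f x1) (f x2) | f. f \<in> F}"

definition gamma_S :: "('x \<Rightarrow> 'x \<Rightarrow> real) \<Rightarrow> ('x \<Rightarrow> real) set" where
  "gamma_S d = {f. unit_fun f \<and> (\<forall>x1 x2. tminus (f x1) (f x2) \<le> d x1 x2)}"

definition c_S :: "('x \<Rightarrow> real) set \<Rightarrow> ('x \<Rightarrow> real) set" where
  "c_S F = gamma_S (alpha_S F)"

end

theory Submission imports Defs begin

lemma join01_upper: "bdd_above S \<Longrightarrow> s \<in> S \<Longrightarrow> s \<le> join01 S"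
  unfolding join01_def by (auto intro: cSup_upper)

lemma join01_least: "(\<And>s. s \<in> S \<Longrightarrow> s \<le> u) \<Longrightarrow> 0 \<le> u \<Longrightarrow> join01 S \<le> u"
  unfolding join01_def by (auto intro: cSup_least)

lemma join01_nonneg: "(\<And>s. s \<in> S \<Longrightarrow> 0 \<le> s \<and> s \<le> 1) \<Longrightarrow> 0 \<le> join01 S"
proof (cases "S = {}")
  case False
  then obtain s where "s \<in> S" by blast
  moreover assume "\<And>s. s \<in> S \<Longrightarrow> 0 \<le> s \<and> s \<le> 1"
  ultimately show ?thesis
    by (meson bdd_above_def join01_upper order_trans)
qed (simp add: join01_def)

lemma unit_min: "unit_fun f \<Longrightarrow> unit_fun g \<Longrightarrow> unit_fun (\<lambda>x. min (f x) (g x))"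
  unfolding unit_fun_def by (simp add: min_def)
lemma unit_tm: "unit_fun f \<Longrightarrow> 0 \<le> r \<Longrightarrow> unit_fun (\<lambda>x. tminus (f x) r)"
  unfolding unit_fun_def tminus_def by (smt (verit))
lemma unit_tp: "unit_fun f \<Longrightarrow> r \<le> 1 \<Longrightarrow> 0 \<le> r \<Longrightarrow> unit_fun (\<lambda>x. tplus (f x) r)"
  unfolding unit_fun_def tplus_def by (simp add: min_def)
lemma unit_one: "unit_fun (\<lambda>x. 1)"
  unfolding unit_fun_def by simp

lemma unit_clos: "f \<in> clos_meet_shift F \<Longrightarrow> \<forall>f\<in>F. unit_fun f \<Longrightarrow> unit_fun f"
  by (induction f rule: clos_meet_shift.induct)
     (simp_all add: unit_min unit_tm unit_tp unit_one)

lemma next_op_unit: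
  assumes "label_metric d" "unit_fun h"
  shows "unit_fun (next_op T d c h)"
  unfolding unit_fun_def
proof
  fix x
  let ?S = "{min (1 - d b c) (h x') | b x'. (x, b, x') \<in> T}"
  have b: "0 \<le> s \<and> s \<le> 1" if "s \<in> ?S" for s
  proof -
    from that obtain b x' where "s = min (1 - d b c) (h x')" by blast
    moreover have "0 \<le> d b c" "d b c \<le> 1" using assms(1) unfolding label_metric_def by auto
    moreover have "0 \<le> h x'" "h x' \<le> 1" using assms(2) unfolding unit_fun_def by auto
    ultimately show ?thesis by simp
  qed
  have "0 \<le> join01 ?S" by (rule join01_nonneg) (rule b)
  moreover have "join01 ?S \<le> 1" by (rule join01_least) (use b in auto)
  ultimately show "0 \<le> next_op T d c h x \<and> next_op T d c h x \<le> 1"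
    unfolding next_op_def by simp
qed

lemma alpha_nonneg:
  assumes "\<forall>f\<in>G. unit_fun f"
  shows "0 \<le> alpha_S G x y \<and> alpha_S G x y \<le> 1"
proof -
  have b: "0 \<le> s \<and> s \<le> 1" if "s \<in> {tminus (f x) (f y) | f. f \<in> G}" for s
  proof -
    from that obtain f where "s = tminus (f x) (f y)" "f \<in> G" by blast
    with assms(1) have "s = max 0 (f x - f y)" "0 \<le> f y" "f x \<le> 1"
      by (auto simp: unit_fun_def tminus_def)
    then show ?thesis by simp
  qed
  have "0 \<le> join01 {tminus (f x) (f y) | f. f \<in> G}" by (rule join01_nonneg) (rule b)
  moreover have "join01 {tminus (f x) (f y) | f. f \<in> G} \<le> 1" by (rule join01_least) (use b in auto)
  ultimately show ?thesis unfolding alpha_S_def by simp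
qed

lemma alpha_upper:
  assumes "\<forall>f\<in>G. unit_fun f" "f \<in> G"
  shows "tminus (f x) (f y) \<le> alpha_S G x y"
proof -
  have b: "0 \<le> s \<and> s \<le> 1" if "s \<in> {tminus (f x) (f y) | f. f \<in> G}" for s
  proof -
    from that obtain f where "s = tminus (f x) (f y)" "f \<in> G" by blast
    with assms(1) have "s = max 0 (f x - f y)" "0 \<le> f y" "f x \<le> 1"
      by (auto simp: unit_fun_def tminus_def)
    then show ?thesis by simp
  qed
  show ?thesis unfolding alpha_S_def
    by (rule join01_upper) (use b assms(2) in \<open>auto simp: bdd_above_def\<close>)
qed

lemma tm_min: "tminus (min a b) (min a' b') \<le> max (tminus a a') (tminus b b')"
  by (simp add: tminus_def min_def max_def)
lemma tm_tm: "tminus (tminus (a::real) r) (tminus b r) \<le> tminus a b"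
  by (simp add: tminus_def max_def)
lemma tm_tp: "tminus (tplus (a::real) r) (tplus b r) \<le> tminus a b"
  by (simp add: tminus_def tplus_def min_def max_def)

lemma clos_cS:
  assumes "\<forall>f\<in>F. unit_fun f" "f \<in> clos_meet_shift (c_S F)"
  shows "f \<in> c_S F"
  using assms(2)
proof (induction f rule: clos_meet_shift.induct)
  case top
  then show ?case using alpha_nonneg[OF assms(1)] unit_one
    by (simp add: c_S_def gamma_S_def tminus_def)
next
  case (meet f g)
  have u: "unit_fun (\<lambda>x. min (f x) (g x))" using meet.IH unit_min
    unfolding c_S_def gamma_S_def by blast
  have "tminus (min (f x1) (g x1)) (min (f x2) (g x2)) \<le> alpha_S F x1 x2" for x1 x2
    using tm_min[of "f x1" "g x1" "f x2" "g x2"] meet.IH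
    by (auto simp: c_S_def gamma_S_def) (metis max.bounded_iff order_trans)
  then show ?case using u by (simp add: c_S_def gamma_S_def)
next
  case (shift_down f r)
  have u: "unit_fun (\<lambda>x. tminus (f x) r)" using shift_down unit_tm
    unfolding c_S_def gamma_S_def by blast
  have "tminus (tminus (f x1) r) (tminus (f x2) r) \<le> alpha_S F x1 x2" for x1 x2
    using tm_tm[of "f x1" r "f x2"] shift_down.IH
    by (auto simp: c_S_def gamma_S_def intro: order_trans)
  then show ?case using u by (simp add: c_S_def gamma_S_def)
next
  case (shift_up f r)
  have u: "unit_fun (\<lambda>x. tplus (f x) r)" using shift_up unit_tp
    unfolding c_S_def gamma_S_def by blast
  have "tminus (tplus (f x1) r) (tplus (f x2) r) \<le> alpha_S F x1 x2" for x1 x2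
    using tm_tp[of "f x1" r "f x2"] shift_up.IH
    by (auto simp: c_S_def gamma_S_def intro: order_trans)
  then show ?case using u by (simp add: c_S_def gamma_S_def)
qed simp

lemma fin_set:
  assumes "fin_branching T"
  shows "finite {min (1 - d b c) (h x') | b x'. (x, b, x') \<in> T}"
proof -
  have "{min (1 - d b c) (h x') | b x'. (x, b, x') \<in> T}
        = (\<lambda>(b,x'). min (1 - d b c) (h x')) ` {(b, x'). (x, b, x') \<in> T}" by auto
  then show ?thesis using assms unfolding fin_branching_def by simp
qed

lemma meet_fin:
  assumes "finite Y" "\<forall>y\<in>Y. H y \<in> clos_meet_shift F"
  shows "\<exists>h\<in>clos_meet_shift F. (\<forall>x. \<forall>y\<in>Y. h x \<le> H y x) \<and>
           (\<forall>x t. t \<le> 1 \<longrightarrow> (\<forall>y\<in>Y. t \<le> H y x) \<longrightarrow> t \<le> h x)"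
  using assms
proof (induction Y rule: finite_induct)
  case empty
  show ?case by (rule bexI[of _ "\<lambda>_. 1"]) (auto intro: clos_meet_shift.top)
next
  case (insert y Y)
  then obtain h where h: "h \<in> clos_meet_shift F" "\<forall>x. \<forall>y\<in>Y. h x \<le> H y x"
    "\<forall>x t. t \<le> 1 \<longrightarrow> (\<forall>y\<in>Y. t \<le> H y x) \<longrightarrow> t \<le> h x" by auto
  show ?case
    by (rule bexI[of _ "\<lambda>x. min (H y x) (h x)"])
       (use h insert.prems in \<open>auto intro: clos_meet_shift.meet simp: min_le_iff_disj\<close>)
qed

lemma shift_fun:
  assumes "k \<in> clos_meet_shift F" "unit_fun k" "0 \<le> v" "v \<le> 1"
  shows "\<exists>h\<in>clos_meet_shift F. h y1 = v \<and> (\<forall>x. h x \<le> max 0 (v - (k y1 - k x)))"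
proof (cases "v \<le> k y1")
  case True
  let ?h = "\<lambda>x. tminus (k x) (k y1 - v)"
  have k1: "0 \<le> k y1" "k y1 \<le> 1" using assms(2) unfolding unit_fun_def by auto
  have "?h \<in> clos_meet_shift F" using assms True k1
    by (intro clos_meet_shift.shift_down) auto
  moreover have "?h y1 = v" using True assms by (simp add: tminus_def)
  moreover have "?h x \<le> max 0 (v - (k y1 - k x))" for x by (simp add: tminus_def)
  ultimately show ?thesis by (intro bexI[of _ ?h]) auto
next
  case False
  let ?h = "\<lambda>x. tplus (k x) (v - k y1)"
  have k1: "0 \<le> k y1" "k y1 \<le> 1" using assms(2) unfolding unit_fun_def by auto
  have "?h \<in> clos_meet_shift F" using assms False k1
    by (intro clos_meet_shift.shift_up) auto
  moreover have "?h y1 = v" using False assms by (simp add: tplus_def)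
  moreover have "?h x \<le> max 0 (v - (k y1 - k x))" for x by (simp add: tplus_def)
  ultimately show ?thesis by (intro bexI[of _ ?h]) auto
qed

theorem mainTheorem14:
  fixes T :: "('x \<times> 'a \<times> 'x) set" and d :: "'a \<Rightarrow> 'a \<Rightarrow> real"
    and F :: "('x \<Rightarrow> real) set"
  assumes "label_metric d"
    and "fin_branching T"
    and "\<forall>f\<in>F. unit_fun f"
  shows "lo_S T d (c_S F) \<subseteq> c_S (lo_S T d F)"
proof
  fix g assume "g \<in> lo_S T d (c_S F)"
  then obtain c f where g: "g = next_op T d c f" and f: "f \<in> clos_meet_shift (c_S F)"
    unfolding lo_S_def by blast
  have fc: "f \<in> c_S F" using clos_cS[OF assms(3) f] .
  have fu: "unit_fun f" and fa: "\<And>x1 x2. tminus (f x1) (f x2) \<le> alpha_S F x1 x2"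
    using fc unfolding c_S_def gamma_S_def by auto
  have gu: "unit_fun g" using next_op_unit[OF assms(1) fu] g by simp
  have CU: "\<forall>h\<in>clos_meet_shift F. unit_fun h" using unit_clos assms(3) by blast
  have LU: "\<forall>h\<in>lo_S T d F. unit_fun h"
    using CU next_op_unit[OF assms(1)] unfolding lo_S_def by blast
  have "tminus (g x1) (g x2) \<le> alpha_S (lo_S T d F) x1 x2" for x1 x2
  proof (cases "g x1 \<le> g x2")
    case True then show ?thesis using alpha_nonneg[OF LU] by (simp add: tminus_def)
  next
    case False
    define S where "S x = {min (1 - d b c) (f x') | b x'. (x, b, x') \<in> T}" for x
    have Sfin: "finite (S x)" for x unfolding S_def by (rule fin_set[OF assms(2)])
    have gS: "g x = join01 (S x)" for x unfolding g next_op_def S_def by simp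
    have g2: "0 \<le> g x2" using gu unfolding unit_fun_def by auto
    have S1: "S x1 \<noteq> {}"
    proof
      assume "S x1 = {}"
      then have "g x1 = 0" using gS unfolding join01_def by simp
      then show False using False g2 by simp
    qed
    have "g x1 = Max (S x1)" using gS S1 Sfin unfolding join01_def by (simp add: cSup_eq_Max)
    then have "g x1 \<in> S x1" using S1 Sfin by simp
    then obtain b1 y1 where t1: "(x1,b1,y1) \<in> T" and v: "g x1 = min (1 - d b1 c) (f y1)"
      unfolding S_def by blast
    have S2: "s \<le> g x2" if "s \<in> S x2" for s
      unfolding gS[of x2] by (rule join01_upper[OF bdd_above_finite[OF Sfin[of x2]] that])
    define eps where "eps = g x1 - g x2"
    have eps: "0 < eps" using False eps_def by simp
    have teq: "tminus (g x1) (g x2) = eps" using eps eps_def by (simp add: tminus_def)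
    define Y where "Y = {y'. \<exists>b'. (x2,b',y') \<in> T \<and> f y' \<le> g x2}"
    have "Y \<subseteq> snd ` {(b, x'). (x2, b, x') \<in> T}" unfolding Y_def by force
    then have Yfin: "finite Y" using assms(2) unfolding fin_branching_def
      by (meson finite_imageI finite_subset)
    have anz: "0 \<le> alpha_S (lo_S T d F) x1 x2" using alpha_nonneg[OF LU] by simp
    show "tminus (g x1) (g x2) \<le> alpha_S (lo_S T d F) x1 x2"
    proof (rule field_le_epsilon)
      fix del :: real assume del: "0 < del"
      show "tminus (g x1) (g x2) \<le> alpha_S (lo_S T d F) x1 x2 + del"
      proof (cases "eps \<le> del")
        case True then show ?thesis using anz teq by simp
      next
        case False
        have "\<forall>y\<in>Y. \<exists>k\<in>F. eps - del < tminus (k y1) (k y)"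
        proof
          fix y assume "y \<in> Y"
          then have "f y \<le> g x2" unfolding Y_def by blast
          moreover have "g x1 \<le> f y1" using v by simp
          ultimately have "eps \<le> tminus (f y1) (f y)" unfolding eps_def tminus_def by simp
          also have "\<dots> \<le> alpha_S F y1 y" by (rule fa)
          finally have "eps - del < alpha_S F y1 y" using del by simp
          then have lt: "eps - del < join01 {tminus (k y1) (k y) | k. k \<in> F}"
            unfolding alpha_S_def .
          moreover have "0 \<le> eps - del" using False by simp
          ultimately have ne: "{tminus (k y1) (k y) | k. k \<in> F} \<noteq> {}"
          proof (intro notI)
            assume "0 \<le> eps - del" "{tminus (k y1) (k y) | k. k \<in> F} = {}"
            then have "join01 {tminus (k y1) (k y) | k. k \<in> F} = 0" unfolding join01_def by presburger
            with lt \<open>0 \<le> eps - del\<close> show False by linarith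
          qed
          have "eps - del < Sup {tminus (k y1) (k y) | k. k \<in> F}"
            using lt ne by (simp add: join01_def)
          then obtain s where "s \<in> {tminus (k y1) (k y) | k. k \<in> F}" "eps - del < s"
            using less_cSupD[OF ne] by blast
          then show "\<exists>k\<in>F. eps - del < tminus (k y1) (k y)" by blast
        qed
        then have "\<exists>K. \<forall>y\<in>Y. K y \<in> F \<and> eps - del < tminus (K y y1) (K y y)"
          unfolding Bex_def by (rule bchoice)
        then obtain K where K: "\<forall>y\<in>Y. K y \<in> F \<and> eps - del < tminus (K y y1) (K y y)"
          by (elim exE)
        have g1: "0 \<le> g x1" "g x1 \<le> 1" using gu unfolding unit_fun_def by auto
        have "\<forall>y\<in>Y. \<exists>h\<in>clos_meet_shift F. h y1 = g x1 \<and>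
                 (\<forall>x. h x \<le> max 0 (g x1 - (K y y1 - K y x)))"
        proof
          fix y assume "y \<in> Y"
          then have "K y \<in> F" using K by blast
          show "\<exists>h\<in>clos_meet_shift F. h y1 = g x1 \<and>
                 (\<forall>x. h x \<le> max 0 (g x1 - (K y y1 - K y x)))"
            by (rule shift_fun[OF clos_meet_shift.base[OF \<open>K y \<in> F\<close>] bspec[OF assms(3) \<open>K y \<in> F\<close>] g1])
        qed
        then have "\<exists>H. \<forall>y\<in>Y. H y \<in> clos_meet_shift F \<and> H y y1 = g x1 \<and>
                 (\<forall>x. H y x \<le> max 0 (g x1 - (K y y1 - K y x)))"
          unfolding Bex_def by (rule bchoice)
        then obtain H where H: "\<forall>y\<in>Y. H y \<in> clos_meet_shift F \<and> H y y1 = g x1 \<and>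
                 (\<forall>x. H y x \<le> max 0 (g x1 - (K y y1 - K y x)))"
          by (elim exE)
        obtain h where h: "h \<in> clos_meet_shift F" "\<forall>x. \<forall>y\<in>Y. h x \<le> H y x"
            "\<forall>x t. t \<le> 1 \<longrightarrow> (\<forall>y\<in>Y. t \<le> H y x) \<longrightarrow> t \<le> h x"
          using meet_fin[OF Yfin, of H F] H by blast
        have hy1: "g x1 \<le> h y1" using h(3) H g1 by simp
        define n where "n = next_op T d c h"
        have nlo: "n \<in> lo_S T d F" unfolding lo_S_def n_def using h(1) by blast
        have n1: "g x1 \<le> n x1"
        proof -
          have "min (1 - d b1 c) (h y1) \<le> n x1" unfolding n_def next_op_def
            by (rule join01_upper[OF bdd_above_finite[OF fin_set[OF assms(2)]]]) (use t1 in blast)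
          moreover have "g x1 \<le> min (1 - d b1 c) (h y1)" using v hy1 by simp
          ultimately show ?thesis by linarith
        qed
        have n2: "n x2 \<le> g x2 + del"
          unfolding n_def next_op_def
        proof (rule join01_least)
          fix s assume "s \<in> {min (1 - d b c) (h x') |b x'. (x2, b, x') \<in> T}"
          then obtain b' y' where t': "(x2,b',y') \<in> T" "s = min (1 - d b' c) (h y')" by blast
          have "min (1 - d b' c) (f y') \<le> g x2" using S2 t' unfolding S_def by blast
          then consider "1 - d b' c \<le> g x2" | "f y' \<le> g x2" by linarith
          then show "s \<le> g x2 + del"
          proof cases
            case 1 then show ?thesis using t' del by simp
          next
            case 2
            then have yY: "y' \<in> Y" unfolding Y_def using t' by blast
            then have "h y' \<le> H y' y'" using h(2) by blast
            also have "\<dots> \<le> max 0 (g x1 - (K y' y1 - K y' y'))" using H yY by blast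
            also have "\<dots> \<le> g x2 + del"
            proof -
              have "eps - del < tminus (K y' y1) (K y' y')" using K yY by blast
              moreover have "0 \<le> eps - del" using False by simp
              ultimately have "eps - del < K y' y1 - K y' y'" by (simp add: tminus_def)
              then show ?thesis using g2 del eps_def by simp
            qed
            finally show ?thesis using t' by simp
          qed
        next
          show "0 \<le> g x2 + del" using g2 del by simp
        qed
        have "eps - del \<le> tminus (n x1) (n x2)" using n1 n2 eps_def by (simp add: tminus_def)
        also have "\<dots> \<le> alpha_S (lo_S T d F) x1 x2" using alpha_upper[OF LU nlo] .
        finally show ?thesis using teq by simp
      qed
    qed
  qed
  then show "g \<in> c_S (lo_S T d F)" unfolding c_S_def gamma_S_def using gu by simp
qed

end
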